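(* Let $\Gamma=(\Gamma^\alpha)_{\alpha\in\{0,1\}^k}$ be a vector of complex numbers indexed by $\{0,1\}^k$ such that for all $\alpha,\beta\in\{0,1\}^k$, writing $p_1<\cdots<p_l$ for the positions where $\alpha$ and $\beta$ differ, \[ \sum_{i=1}^{l}(-1)^{i}\,\Gamma^{\alpha\oplus e_{p_i}}\,\Gamma^{\beta\oplus e_{p_i}}=0 . \] Then $\Gamma$ satisfies the Parity Condition: either $\Gamma^\alpha=0$ for all $\alpha$ of odd Hamming weight, or $\Gamma^\alpha=0$ for all $\alpha$ of even Hamming weight.
   Context: $\oplus$ denotes bitwise XOR and $e_j\in\{0,1\}^k$ is the string with a $1$ in position $j$ and $0$ elsewhere. *)

theory Defs
  imports Complex_Main
begin

text \<open>Binary strings in {0,1}^k are modelled as boolean lists of length k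
  (True = 1). Positions are 0-based indices 0..k-1.\<close>

definition bitstrings :: "nat \<Rightarrow> bool list set" where
  "bitstrings k = {xs. length xs = k}"

definition flip :: "bool list \<Rightarrow> nat \<Rightarrow> bool list" where
  "flip xs j = xs[j := \<not> xs ! j]"

definition hweight :: "bool list \<Rightarrow> nat" where
  "hweight xs = length (filter id xs)"

definition diffpos :: "bool list \<Rightarrow> bool list \<Rightarrow> nat list" where
  "diffpos a b = filter (\<lambda>j. a ! j \<noteq> b ! j) [0..<length a]"

definition parity_condition :: "nat \<Rightarrow> (bool list \<Rightarrow> complex) \<Rightarrow> bool" where
  "parity_condition k G \<longleftrightarrow>
     (\<forall>a\<in>bitstrings k. odd (hweight a) \<longrightarrow> G a = 0) \<or>
     (\<forall>a\<in>bitstrings k. even (hweight a) \<longrightarrow> G a = 0)"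

end

theory Submission
  imports Defs
begin

lemma len_diffpos: "length (diffpos a b) = card {j. j < length a \<and> a ! j \<noteq> b ! j}"
  unfolding diffpos_def by (simp add: length_filter_conv_card cong: conj_cong)

lemma set_diffpos: "set (diffpos a b) = {j. j < length a \<and> a ! j \<noteq> b ! j}"
  unfolding diffpos_def by auto

lemma distinct_diffpos: "distinct (diffpos a b)"
  unfolding diffpos_def by simp

lemma length_flip[simp]: "length (flip x p) = length x"
  unfolding flip_def by simp

lemma nth_flip: "flip x p ! j = (if j = p \<and> p < length x then \<not> x ! j else x ! j)"
  unfolding flip_def by (auto simp: nth_list_update list_update_beyond)

lemma flip_flip: "flip (flip x p) p = x"
  unfolding flip_def by (cases "p < length x") (auto simp: list_update_beyond)

lemma diffpos_flip2:
  assumes "length y = length x"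
  shows "diffpos (flip x p) (flip y p) = diffpos x y"
  unfolding diffpos_def using assms
  by (auto simp: nth_flip intro!: filter_cong)

lemma dist_flip_flip:
  assumes "length y = length x" "p \<in> set (diffpos x y)" "q \<in> set (diffpos x y)" "p \<noteq> q"
  shows "length (diffpos (flip (flip x p) q) y) = length (diffpos x y) - 2"
proof -
  let ?S = "{j. j < length x \<and> x ! j \<noteq> y ! j}"
  have pq: "p < length x" "q < length x" "x!p \<noteq> y!p" "x!q \<noteq> y!q"
    using assms(2,3) by (auto simp: set_diffpos)
  have "{j. j < length (flip (flip x p) q) \<and> flip (flip x p) q ! j \<noteq> y ! j} = ?S - {p, q}"
    using pq assms(4) by (auto simp: nth_flip)
  moreover have "card (?S - {p,q}) = card ?S - 2"
    using pq assms(4) by (subst card_Diff_subset) auto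
  ultimately show ?thesis by (simp add: len_diffpos)
qed

lemma main:
  fixes k :: nat and G :: "bool list \<Rightarrow> complex"
  assumes H: "\<forall>a\<in>bitstrings k. \<forall>b\<in>bitstrings k.
    (\<Sum>i=1..length (diffpos a b).
       (-1) ^ i * G (flip a (diffpos a b ! (i - 1))) * G (flip b (diffpos a b ! (i - 1)))) = 0"
  shows "\<forall>x y. x \<in> bitstrings k \<longrightarrow> y \<in> bitstrings k \<longrightarrow> length (diffpos x y) = d
     \<longrightarrow> odd d \<longrightarrow> G x * G y = 0"
proof (induction d rule: less_induct)
  case (less d)
  show ?case
  proof (intro allI impI)
    fix x y assume xk: "x \<in> bitstrings k" and yk: "y \<in> bitstrings k"
      and dd: "length (diffpos x y) = d" and od: "odd d"
    show "G x * G y = 0"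
    proof (rule ccontr)
      assume nz: "G x * G y \<noteq> 0"
      hence Gy: "G y \<noteq> 0" by auto
      define ds where "ds = diffpos x y"
      have lx: "length x = k" "length y = k" using xk yk by (auto simp: bitstrings_def)
      have dpos: "d \<ge> 1" using od by (cases d) auto
      define p where "p = ds ! 0"
      have pin: "p \<in> set ds" using dpos dd unfolding p_def ds_def by auto
      have ab: "flip x p \<in> bitstrings k" "flip y p \<in> bitstrings k"
        using lx by (auto simp: bitstrings_def)
      have dab: "diffpos (flip x p) (flip y p) = ds"
        unfolding ds_def using lx by (simp add: diffpos_flip2)
      define f where "f i = (-1::complex) ^ i * G (flip (flip x p) (ds ! (i - 1)))
          * G (flip (flip y p) (ds ! (i - 1)))" for i
      have S: "(\<Sum>i=1..d. f i) = 0"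
        using bspec[OF bspec[OF H ab(1)] ab(2)] dab dd unfolding f_def ds_def by simp
      have z: "f i = 0" if "i \<in> {2..d}" for i
      proof -
        let ?q = "ds ! (i - 1)"
        have ilt: "i - 1 < length ds" using that dd ds_def by auto
        have qin: "?q \<in> set ds" using ilt by simp
        have qp: "?q \<noteq> p" unfolding p_def
          using ilt that distinct_diffpos[of x y] unfolding ds_def
          by (subst nth_eq_iff_index_eq) auto
        have d3: "d \<ge> 3" using that od by (cases "d = 2") auto
        have len: "length (diffpos (flip (flip x p) ?q) y) = d - 2"
          using dist_flip_flip[of y x p ?q] lx pin qin qp dd unfolding ds_def by auto
        have "flip (flip x p) ?q \<in> bitstrings k" using lx by (simp add: bitstrings_def)
        moreover have "odd (d - 2)" using od d3 by auto
        ultimately have "G (flip (flip x p) ?q) * G y = 0"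
          using less.IH[of "d-2"] d3 len yk by auto
        hence "G (flip (flip x p) ?q) = 0" using Gy by simp
        thus ?thesis unfolding f_def by simp
      qed
      have "(\<Sum>i=1..d. f i) = f 1 + (\<Sum>i=2..d. f i)"
        using dpos by (subst sum.atLeast_Suc_atMost) (auto simp: numeral_2_eq_2)
      also have "(\<Sum>i=2..d. f i) = 0" using z by simp
      finally have "f 1 = 0" using S by simp
      hence "G x * G y = 0" unfolding f_def p_def by (simp add: flip_flip)
      thus False using nz by simp
    qed
  qed
qed

lemma parity_dist:
  assumes "length b = length a"
  shows "odd (length (diffpos a b)) \<longleftrightarrow> odd (hweight a + hweight b)"
proof -
  let ?A = "{j. j < length a \<and> a ! j}" and ?B = "{j. j < length a \<and> b ! j}"
  have ha: "hweight a = card ?A" unfolding hweight_def by (simp add: length_filter_conv_card)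
  have hb: "hweight b = card ?B" unfolding hweight_def using assms
    by (simp add: length_filter_conv_card)
  have D: "{j. j < length a \<and> a ! j \<noteq> b ! j} = (?A \<union> ?B) - (?A \<inter> ?B)" by auto
  have f: "finite ?A" "finite ?B" by auto
  have c1: "card ?A + card ?B = card (?A \<union> ?B) + card (?A \<inter> ?B)"
    using card_Un_Int[OF f] .
  have c2: "card ((?A \<union> ?B) - (?A \<inter> ?B)) = card (?A \<union> ?B) - card (?A \<inter> ?B)"
    using f by (subst card_Diff_subset) auto
  have c3: "card (?A \<inter> ?B) \<le> card (?A \<union> ?B)" using f by (intro card_mono) auto
  show ?thesis unfolding len_diffpos D c2 ha hb c1 using c3 by auto
qed

theorem theorem2:
  fixes k :: nat and G :: "bool list \<Rightarrow> complex"
  assumes "\<forall>a\<in>bitstrings k. \<forall>b\<in>bitstrings k.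
    (\<Sum>i=1..length (diffpos a b).
       (-1) ^ i * G (flip a (diffpos a b ! (i - 1))) * G (flip b (diffpos a b ! (i - 1)))) = 0"
  shows "parity_condition k G"
proof (rule ccontr)
  assume "\<not> parity_condition k G"
  then obtain a b where a: "a \<in> bitstrings k" "odd (hweight a)" "G a \<noteq> 0"
    and b: "b \<in> bitstrings k" "even (hweight b)" "G b \<noteq> 0"
    unfolding parity_condition_def by auto
  have "odd (length (diffpos a b))" using a b parity_dist[of b a]
    by (auto simp: bitstrings_def)
  hence "G a * G b = 0" using main[OF assms] a b by blast
  thus False using a b by simp
qed

end
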